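(* Let $A$ and $N$ be real $m\times n$ matrices, let $\tilde A=A+N$, and assume $\|N\|_2\le\eta$ for some $\eta\ge0$. Let $\tilde A_1,\ldots,\tilde A_n$ be the columns of $\tilde A$, let $\tilde\rho=\mathrm{rank}(\tilde A)\ge 1$, let $\mu\ge 0$, and let $\pi:[n]\to[n]$ be a permutation such that $\tilde A_{\pi(1)},\ldots,\tilde A_{\pi(\tilde\rho)}$ are linearly independent. For $k\in\{0,\ldots,\tilde\rho\}$ let $W_k$ be the orthogonal projection onto $\mathrm{span}\{\tilde A_{\pi(1)},\ldots,\tilde A_{\pi(k)}\}$ ($W_0=0$), $W_k^\perp=I-W_k$, and $\tilde Q_k=W_{k-1}^\perp(\tilde A_{\pi(k)})/\|W_{k-1}^\perp(\tilde A_{\pi(k)})\|$ for $k\in[\tilde\rho]$. Let $s\in[\tilde\rho]$ be such that $\|W_s^\perp(\tilde A_i)\|\le\mu$ for all $i\in[n]$, and define $\tilde F_s:\mathbb R^m\to\mathbb R^s$ by $\tilde F_s(v)=(\tilde Q_{[s]})^*v$, where $\tilde Q_{[s]}$ has columns $\tilde Q_1,\ldots,\tilde Q_s$ (so $\tilde F_s$ is a $2\mu$-distortion of the columns of $\tilde A$). Then $\tilde F_s$ is a $2(\mu+\eta)$-distortion of the columns $A_1,\ldots,A_n$ of $A$, i.e. $$\sup_{i,j\in[n]}\Big|\,\|A_i-A_j\|-\|\tilde F_s(A_i)-\tilde F_s(A_j)\|\,\Big|\le 2(\mu+\eta).$$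
   Context: Vector norms are Euclidean; $\|N\|_2$ is the operator norm of $N$ induced by the Euclidean norm; $[k]=\{1,\ldots,k\}$; $^*$ denotes transpose. A map $F$ on a set $\mathcal A$ is a $\mu$-distortion of $\mathcal A$ if $\sup_{x,y\in\mathcal A}|\,\|x-y\|-\|F(x)-F(y)\|\,|\le\mu$. *)

theory Defs
  imports "HOL-Analysis.Analysis"
begin

definition orth_proj :: "'a::euclidean_space set \<Rightarrow> 'a \<Rightarrow> 'a" where
  "orth_proj S v = (THE w. w \<in> span S \<and> (\<forall>u\<in>S. (v - w) \<bullet> u = 0))"

definition Wproj :: "real^'n^'m \<Rightarrow> (nat \<Rightarrow> 'n) \<Rightarrow> nat \<Rightarrow> real^'m \<Rightarrow> real^'m" where
  "Wproj At p k = orth_proj ((\<lambda>j. column (p j) At) ` {1..k})"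

definition Wperp :: "real^'n^'m \<Rightarrow> (nat \<Rightarrow> 'n) \<Rightarrow> nat \<Rightarrow> real^'m \<Rightarrow> real^'m" where
  "Wperp At p k v = v - Wproj At p k v"

definition Qvec :: "real^'n^'m \<Rightarrow> (nat \<Rightarrow> 'n) \<Rightarrow> nat \<Rightarrow> real^'m" where
  "Qvec At p k = (let w = Wperp At p (k - 1) (column (p k) At) in w /\<^sub>R norm w)"

text \<open>F_s(v) = Q_[s]^* v, a vector in R^s represented by its coordinates k = 1..s.\<close>
definition Fs :: "real^'n^'m \<Rightarrow> (nat \<Rightarrow> 'n) \<Rightarrow> nat \<Rightarrow> real^'m \<Rightarrow> nat \<Rightarrow> real" where
  "Fs At p s v = (\<lambda>k. Qvec At p k \<bullet> v)"

definition dist_s :: "nat \<Rightarrow> (nat \<Rightarrow> real) \<Rightarrow> (nat \<Rightarrow> real) \<Rightarrow> real" where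
  "dist_s s x y = L2_set (\<lambda>k. x k - y k) {1..s}"

end

theory Submission
  imports Defs
begin

lemma orth_proj_eq:
  fixes S :: "'a::euclidean_space set"
  assumes "w \<in> span S" "\<forall>u\<in>S. (v - w) \<bullet> u = 0"
  shows "orth_proj S v = w"
proof -
  have uniq: "w' = w" if "w' \<in> span S" "\<forall>u\<in>S. (v - w') \<bullet> u = 0" for w'
  proof -
    have "orthogonal (w' - w) d" if "d \<in> span S" for d
    proof (rule orthogonal_to_span[OF that])
      fix y assume "y \<in> S"
      have "(w' - w) \<bullet> y = (v - w) \<bullet> y - (v - w') \<bullet> y" by (simp add: inner_diff_left)
      then show "orthogonal (w' - w) y"
        using assms(2) \<open>\<forall>u\<in>S. (v - w') \<bullet> u = 0\<close> \<open>y \<in> S\<close>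
        by (simp add: orthogonal_def)
    qed
    moreover have "w' - w \<in> span S" using that(1) assms(1) by (simp add: span_diff)
    ultimately have "(w' - w) \<bullet> (w' - w) = 0" by (simp add: orthogonal_def)
    then show ?thesis by simp
  qed
  show ?thesis unfolding orth_proj_def
  proof (rule the_equality)
    show "w \<in> span S \<and> (\<forall>u\<in>S. (v - w) \<bullet> u = 0)" using assms by blast
  next
    fix w' assume "w' \<in> span S \<and> (\<forall>u\<in>S. (v - w') \<bullet> u = 0)"
    then show "w' = w" using uniq by blast
  qed
qed

lemma orth_proj_char:
  fixes S :: "'a::euclidean_space set"
  shows "orth_proj S v \<in> span S \<and> (\<forall>u\<in>span S. (v - orth_proj S v) \<bullet> u = 0)"
proof -
  obtain y z where y: "y \<in> span S" and z: "\<And>w. w \<in> span S \<Longrightarrow> orthogonal z w" and v: "v = y + z"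
    using orthogonal_subspace_decomp_exists by blast
  have vy: "v - y = z" using v by simp
  have "orth_proj S v = y"
  proof (rule orth_proj_eq)
    show "y \<in> span S" by (fact y)
    show "\<forall>u\<in>S. (v - y) \<bullet> u = 0" unfolding vy using z span_base unfolding orthogonal_def by blast
  qed
  then show ?thesis using y z unfolding vy by (simp add: orthogonal_def vy)
qed

lemma column_add: "column i (A + B) = column i A + column i (B::real^'n^'m)"
  by (simp add: column_def vec_eq_iff)

theorem proposition2:
  fixes A N :: "real^'n^'m" and \<eta> \<mu> :: real and p :: "nat \<Rightarrow> 'n" and s :: nat
  assumes "onorm (\<lambda>x. N *v x) \<le> \<eta>" and "\<eta> \<ge> 0" and "\<mu> \<ge> 0"
    and "rank (A + N) \<ge> 1"
    and "bij_betw p {1..CARD('n)} UNIV"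
    and "independent ((\<lambda>k. column (p k) (A + N)) ` {1..rank (A + N)})"
    and "inj_on (\<lambda>k. column (p k) (A + N)) {1..rank (A + N)}"
    and "s \<in> {1..rank (A + N)}"
    and "\<forall>i. norm (Wperp (A + N) p s (column i (A + N))) \<le> \<mu>"
  shows "\<forall>i j. \<bar>norm (column i A - column j A)
              - dist_s s (Fs (A + N) p s (column i A)) (Fs (A + N) p s (column j A))\<bar>
            \<le> 2 * (\<mu> + \<eta>)"
proof -
  define At where "At = A + N"
  define r where "r = rank At"
  define a where "a = (\<lambda>k. column (p k) At)"
  define S where "S = (\<lambda>k. a ` {1..k})"
  define Q where "Q = Qvec At p"
  have indep: "independent (S r)" using assms(6) by (simp add: S_def a_def r_def At_def)
  have inj: "inj_on a {1..r}" using assms(7) by (simp add: a_def r_def At_def)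
  have sr: "1 \<le> s" "s \<le> r" using assms(8) by (auto simp: r_def At_def)
  have WS: "Wperp At p k v = v - orth_proj (S k) v" for k v
    by (simp add: Wperp_def Wproj_def S_def a_def)
  have Sk_mono: "S j \<subseteq> S k" if "j \<le> k" for j k using that by (auto simp: S_def)
  have indk: "independent (S k)" if "k \<le> r" for k
    using independent_mono[OF indep Sk_mono[OF that]] .
  have cardk: "card (S k) = k" if "k \<le> r" for k
  proof -
    have "inj_on a {1..k}" using inj that by (auto intro: inj_on_subset)
    then show ?thesis by (simp add: S_def card_image)
  qed
  have notin: "a k \<notin> span (S (k-1))" if "k \<in> {1..r}" for k
  proof
    assume h: "a k \<in> span (S (k-1))"
    have "S (k-1) \<subseteq> S r - {a k}"
    proof
      fix x assume "x \<in> S (k-1)"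
      then obtain j where j: "j \<in> {1..k-1}" "x = a j" by (auto simp: S_def)
      have jk: "j \<noteq> k" "j \<in> {1..r}" "k \<in> {1..r}" using j that by auto
      have "a j \<noteq> a k" using inj_on_contraD[OF inj jk] .
      then show "x \<in> S r - {a k}" using j that by (auto simp: S_def)
    qed
    then have "a k \<in> span (S r - {a k})" using h span_mono by blast
    moreover have "a k \<in> S r" using that by (auto simp: S_def)
    ultimately have "dependent (S r)" by (auto simp: dependent_def)
    then show False using indep by simp
  qed
  have Qprops: "norm (Q k) = 1 \<and> Q k \<in> span (S k) \<and> (\<forall>u\<in>span (S (k-1)). Q k \<bullet> u = 0)"
    if k: "k \<in> {1..r}" for k
  proof -
    define w where "w = a k - orth_proj (S (k-1)) (a k)"
    have Qw: "Q k = w /\<^sub>R norm w" by (simp add: Q_def Qvec_def Let_def WS w_def a_def)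
    have pc: "orth_proj (S (k-1)) (a k) \<in> span (S (k-1))"
      "\<forall>u\<in>span (S (k-1)). w \<bullet> u = 0" using orth_proj_char w_def by auto
    have "w \<noteq> 0" using notin[OF k] pc(1) by (auto simp: w_def)
    moreover have "w \<in> span (S k)"
    proof -
      have "a k \<in> span (S k)" using k by (auto simp: S_def intro: span_base)
      moreover have "orth_proj (S (k-1)) (a k) \<in> span (S k)"
        using pc(1) span_mono[OF Sk_mono[of "k-1" k]] by auto
      ultimately show ?thesis by (simp add: w_def span_diff)
    qed
    ultimately show ?thesis using pc(2) by (simp add: Qw span_mul)
  qed
  have orthn: "Q j \<bullet> Q k = (if j = k then 1 else 0)" if "j \<in> {1..s}" "k \<in> {1..s}" for j k
  proof -
    have lt: "Q j \<bullet> Q k = 0" if "j \<in> {1..s}" "k \<in> {1..s}" "j < k" for j k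
    proof -
      have "j \<le> k - 1" using that by auto
      then have "span (S j) \<subseteq> span (S (k-1))" using span_mono[OF Sk_mono] by blast
      moreover have "Q j \<in> span (S j)" using Qprops[of j] that sr by auto
      ultimately have "Q j \<in> span (S (k-1))" by blast
      then have "Q k \<bullet> Q j = 0" using Qprops[of k] that sr by auto
      then show ?thesis by (simp add: inner_commute)
    qed
    show ?thesis
    proof (cases "j = k")
      case True
      then have "norm (Q k) = 1" using Qprops[of k] that sr by auto
      then show ?thesis using True by (simp add: dot_square_norm)
    next
      case False
      then show ?thesis using lt[of j k] lt[of k j] that by (cases "j < k") (auto simp: inner_commute)
    qed
  qed
  define Y where "Y = (\<lambda>z. \<Sum>k\<in>{1..s}. (Q k \<bullet> z) *\<^sub>R Q k)"
  have YQ: "Y z \<bullet> Q k = Q k \<bullet> z" if "k \<in> {1..s}" for z k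
  proof -
    have "Y z \<bullet> Q k = (\<Sum>j\<in>{1..s}. (Q j \<bullet> z) * (if j = k then 1 else 0))"
      unfolding Y_def inner_sum_left using orthn that by (auto intro!: sum.cong)
    also have "\<dots> = Q k \<bullet> z" using that by (simp add: if_distrib sum.delta cong: if_cong)
    finally show ?thesis .
  qed
  have YY: "Y z \<bullet> Y z = (\<Sum>k\<in>{1..s}. (Q k \<bullet> z)^2)" for z
  proof -
    have "Y z \<bullet> Y z = Y z \<bullet> (\<Sum>k\<in>{1..s}. (Q k \<bullet> z) *\<^sub>R Q k)"
      by (simp add: Y_def)
    also have "\<dots> = (\<Sum>k\<in>{1..s}. (Q k \<bullet> z) * (Y z \<bullet> Q k))"
      by (simp add: inner_sum_right)
    also have "\<dots> = (\<Sum>k\<in>{1..s}. (Q k \<bullet> z)^2)"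
      using YQ by (auto intro!: sum.cong simp: power2_eq_square)
    finally show ?thesis .
  qed
  have RQ: "(z - Y z) \<bullet> Q k = 0" if "k \<in> {1..s}" for z k
    using YQ[OF that, of z] by (simp add: inner_diff_left inner_commute[of z "Q k"])
  have RY: "(z - Y z) \<bullet> Y z = 0" for z
  proof -
    have "(z - Y z) \<bullet> Y z = (z - Y z) \<bullet> (\<Sum>k\<in>{1..s}. (Q k \<bullet> z) *\<^sub>R Q k)"
      by (simp add: Y_def)
    also have "\<dots> = (\<Sum>k\<in>{1..s}. (Q k \<bullet> z) * ((z - Y z) \<bullet> Q k))"
      by (simp only: inner_sum_right inner_scaleR_right)
    also have "\<dots> = 0" using RQ by simp
    finally show ?thesis .
  qed
  have Rle: "norm (z - Y z) \<le> norm z" for z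
  proof -
    have "z \<bullet> z = (z - Y z) \<bullet> (z - Y z) + Y z \<bullet> Y z"
    proof -
      have "z = (z - Y z) + Y z" by simp
      then have "z \<bullet> z = ((z - Y z) + Y z) \<bullet> ((z - Y z) + Y z)" by simp
      also have "\<dots> = (z - Y z) \<bullet> (z - Y z) + 2 * ((z - Y z) \<bullet> Y z) + Y z \<bullet> Y z"
        by (simp only: inner_add_left inner_add_right inner_commute[of "Y z" "z - Y z"])
      finally show ?thesis using RY by simp
    qed
    moreover have "Y z \<bullet> Y z \<ge> 0" by simp
    ultimately show ?thesis by (simp add: norm_le)
  qed
  have Ydiff: "Y (x - y) = Y x - Y y" for x y
    by (simp add: Y_def inner_diff_right scaleR_left_diff_distrib sum_subtractf)
  have QinS: "Q k \<in> span (S s)" if "k \<in> {1..s}" for k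
    using Qprops[of k] that sr span_mono[OF Sk_mono[of k s]] by auto
  have spanQ: "S s \<subseteq> span (Q ` {1..s})"
  proof -
    have injQ: "inj_on Q {1..s}"
    proof (rule inj_onI)
      fix j k assume "j \<in> {1..s}" "k \<in> {1..s}" "Q j = Q k"
      then show "j = k" using orthn[of j k] orthn[of k k] by (auto split: if_splits)
    qed
    have ind: "independent (Q ` {1..s})"
    proof (rule pairwise_orthogonal_independent)
      show "pairwise orthogonal (Q ` {1..s})"
        unfolding pairwise_def orthogonal_def using orthn by auto
      show "0 \<notin> Q ` {1..s}" using orthn by force
    qed
    have "span (S s) \<subseteq> span (Q ` {1..s})"
    proof (rule card_ge_dim_independent)
      show "Q ` {1..s} \<subseteq> span (S s)" using QinS by auto
      show "independent (Q ` {1..s})" by (fact ind)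
      show "dim (span (S s)) \<le> card (Q ` {1..s})"
        using dim_eq_card_independent[OF indk[OF sr(2)]] cardk[OF sr(2)] injQ
        by (simp add: dim_span card_image)
    qed
    then show ?thesis using span_superset by blast
  qed
  have WY: "Wperp At p s z = z - Y z" for z
  proof -
    have "orth_proj (S s) z = Y z"
    proof (rule orth_proj_eq)
      show "Y z \<in> span (S s)" unfolding Y_def
        by (rule span_sum) (use QinS in \<open>auto intro: span_mul\<close>)
      show "\<forall>u\<in>S s. (z - Y z) \<bullet> u = 0"
      proof
        fix u assume "u \<in> S s"
        then have "u \<in> span (Q ` {1..s})" using spanQ by auto
        then have "orthogonal (z - Y z) u"
          by (rule orthogonal_to_span) (use RQ in \<open>auto simp: orthogonal_def\<close>)
        then show "(z - Y z) \<bullet> u = 0" by (simp add: orthogonal_def)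
      qed
    qed
    then show ?thesis by (simp add: WS)
  qed
  have Ncol: "norm (column i N) \<le> \<eta>" for i
  proof -
    have "norm (column i N) = norm (N *v axis i 1)" by (simp add: matrix_vector_mult_basis)
    also have "\<dots> \<le> onorm (\<lambda>x. N *v x) * norm (axis i (1::real) :: real^'n)"
      by (rule onorm) simp
    also have "\<dots> \<le> \<eta>" using assms(1) by simp
    finally show ?thesis .
  qed
  show ?thesis
  proof (intro allI)
    fix i j
    define x where "x = column i A - column j A"
    have xd: "x = (column i At - column j At) - (column i N - column j N)"
      by (simp add: x_def At_def column_add)
    have t3: "norm (u - v - w) \<le> norm u + norm v + norm w" for u v w :: "real^'m"
      using norm_triangle_ineq4[of "u-v" w] norm_triangle_ineq4[of u v] by linarith
    have eqx: "x - Y x = (column i At - Y (column i At)) - (column j At - Y (column j At))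
        - ((column i N - column j N) - Y (column i N - column j N))"
      unfolding xd Ydiff by simp
    have "norm (x - Y x) \<le> norm (column i At - Y (column i At))
        + norm (column j At - Y (column j At)) + norm (column i N - column j N)"
      using Rle[of "column i N - column j N"] t3[of "column i At - Y (column i At)" "column j At - Y (column j At)"
        "(column i N - column j N) - Y (column i N - column j N)"] unfolding eqx by linarith
    also have "\<dots> \<le> \<mu> + \<mu> + (\<eta> + \<eta>)"
    proof -
      have "norm (column i At - Y (column i At)) \<le> \<mu>" "norm (column j At - Y (column j At)) \<le> \<mu>"
        using assms(9) WY unfolding At_def[symmetric] by metis+
      then show ?thesis using Ncol[of i] Ncol[of j] norm_triangle_ineq4[of "column i N" "column j N"]
        by linarith
    qed
    finally have b: "norm (x - Y x) \<le> 2 * (\<mu> + \<eta>)" by simp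
    have ds: "dist_s s (Fs At p s (column i A)) (Fs At p s (column j A)) = norm (Y x)"
    proof -
      have "dist_s s (Fs At p s (column i A)) (Fs At p s (column j A))
          = sqrt (\<Sum>k\<in>{1..s}. (Q k \<bullet> x)^2)"
        by (simp add: dist_s_def Fs_def L2_set_def Q_def x_def inner_diff_right)
      also have "\<dots> = norm (Y x)" by (simp only: norm_eq_sqrt_inner YY)
      finally show ?thesis .
    qed
    have "\<bar>norm x - dist_s s (Fs At p s (column i A)) (Fs At p s (column j A))\<bar> \<le> 2 * (\<mu> + \<eta>)"
      using b ds norm_triangle_ineq3[of x "Y x"] by linarith
    then show "\<bar>norm (column i A - column j A)
              - dist_s s (Fs (A + N) p s (column i A)) (Fs (A + N) p s (column j A))\<bar>
            \<le> 2 * (\<mu> + \<eta>)"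
      by (simp only: At_def x_def)
  qed
qed

end
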